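(* Let $\Lambda=(V,\pi,v,\le)$ be a bi-colored weighted ordered vertex with $r(\Lambda)=2$ and $|V_\bullet|=1$, identify $V=\{1,\dots,l\}$ via $\le$, and suppose $s(\Lambda)\ne0$. Then: if $\pi(1)=\circ$, $\pi(2)=\bullet$ and $\pi(i)=\circ$ for all $i\ge3$, then $s(\Lambda)=(-1)^l$; if $\pi(1)=\bullet$ and $\pi(i)=\circ$ for all $i\ge2$, then $s(\Lambda)=(-1)^{l-1}$.
   Context: A bi-colored weighted ordered vertex is $\Lambda=(V,\pi,v,\le)$ with $V$ a finite set, $\pi\colon V\to\{\bullet,\circ\}$, $v\colon V\to\mathbb{Z}_{\ge1}$, $\le$ a total order on $V$. Put $V_\bullet=\pi^{-1}(\bullet)$, $V_\circ=\pi^{-1}(\circ)$, $r(\Lambda)=\sum_{i\in V_\bullet}v(i)$; $v_i=(v(i),0)$ if $i\in V_\bullet$, $v_i=(0,v(i))$ if $i\in V_\circ$. For $(r,n)\in\mathbb{Z}_{\ge0}^2\setminus\{0\}$ let $\mu(r,n)=n/r\in\mathbb{Q}\cup\{\infty\}$ ($\infty$ if $r=0$). For vectors $w_1,\dots,w_l$ define $s_l(w_1,\dots,w_l)=(-1)^k$ if for each $i=1,\dots,l-1$ either (a) $\mu(w_i)>\mu(w_{i+1})$ and $\mu(w_1+\dots+w_i)\ge\mu(w_{i+1}+\dots+w_l)$, or (b) $\mu(w_i)\le\mu(w_{i+1})$ and $\mu(w_1+\dots+w_i)<\mu(w_{i+1}+\dots+w_l)$, where $k$ is the number of $i$ satisfying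 (b); otherwise $s_l=0$. Set $s(\Lambda)=s_l(v_1,\dots,v_l)$, $l=|V|$. *)

theory Defs
  imports "HOL-Library.Extended_Real"
begin

datatype color = Black | White

text \<open>A bi-colored weighted ordered vertex, with V identified with {1..l} via the
  total order, is represented as the list of (colour, weight) of its vertices in order.\<close>
type_synonym bwov = "(color \<times> nat) list"

definition wf_bwov :: "bwov \<Rightarrow> bool" where
  "wf_bwov L \<longleftrightarrow> (\<forall>x\<in>set L. snd x \<ge> 1)"

definition r_of :: "bwov \<Rightarrow> nat" where
  "r_of L = sum_list (map snd (filter (\<lambda>x. fst x = Black) L))"

definition n_black :: "bwov \<Rightarrow> nat" where
  "n_black L = length (filter (\<lambda>x. fst x = Black) L)"

definition vec_of :: "color \<times> nat \<Rightarrow> nat \<times> nat" where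
  "vec_of x = (if fst x = Black then (snd x, 0) else (0, snd x))"

definition mu :: "nat \<times> nat \<Rightarrow> ereal" where
  "mu w = (if fst w = 0 then PInfty else ereal (real (snd w) / real (fst w)))"

definition vsum :: "(nat \<times> nat) list \<Rightarrow> nat \<times> nat" where
  "vsum ws = (sum_list (map fst ws), sum_list (map snd ws))"

text \<open>Conditions (a) and (b) at position i (1 \<le> i \<le> l-1), with 1-based w_1..w_l
  stored as ws!0..ws!(l-1).\<close>
definition cond_a :: "(nat \<times> nat) list \<Rightarrow> nat \<Rightarrow> bool" where
  "cond_a ws i \<longleftrightarrow> mu (ws ! (i - 1)) > mu (ws ! i) \<and>
       mu (vsum (take i ws)) \<ge> mu (vsum (drop i ws))"

definition cond_b :: "(nat \<times> nat) list \<Rightarrow> nat \<Rightarrow> bool" where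
  "cond_b ws i \<longleftrightarrow> mu (ws ! (i - 1)) \<le> mu (ws ! i) \<and>
       mu (vsum (take i ws)) < mu (vsum (drop i ws))"

definition s_l :: "(nat \<times> nat) list \<Rightarrow> int" where
  "s_l ws = (if (\<forall>i\<in>{1..<length ws}. cond_a ws i \<or> cond_b ws i)
             then (-1) ^ card {i\<in>{1..<length ws}. cond_b ws i} else 0)"

definition s_of :: "bwov \<Rightarrow> int" where
  "s_of L = s_l (map vec_of L)"

end

theory Submission
  imports Defs
begin

lemma mu_inf: "fst z = 0 \<Longrightarrow> mu z = PInfty"
  by (simp add: mu_def)

lemma mu_fin: "fst z = 2 \<Longrightarrow> mu z < PInfty"
  by (simp add: mu_def)

lemma mu_20: "mu (2,0) = 0"
  by (simp add: mu_def zero_ereal_def)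

lemma sum_fst0: "\<forall>z\<in>set zs. fst z = (0::nat) \<Longrightarrow> sum_list (map fst zs) = 0"
  by (induction zs) auto

lemma vec_white: "fst x = White \<Longrightarrow> fst (vec_of x) = 0"
  by (simp add: vec_of_def)

lemma case1:
  assumes "r_of L = 2" "length L \<ge> 2" "fst (L ! 0) = White" "fst (L ! 1) = Black"
    "\<forall>i. 2 \<le> i \<and> i < length L \<longrightarrow> fst (L ! i) = White"
  shows "s_of L = (-1) ^ length L"
proof -
  obtain x y rest where L: "L = x # y # rest"
    using assms(2) by (cases L; cases "tl L") auto
  have rw: "\<forall>z\<in>set rest. fst z = White"
  proof
    fix z assume "z \<in> set rest"
    then obtain j where j: "j < length rest" "rest ! j = z" by (auto simp: in_set_conv_nth)
    have "fst (L ! Suc (Suc j)) = White" using assms(5)[rule_format, of "Suc (Suc j)"] j unfolding L by simp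
    thus "fst z = White" using j unfolding L by simp
  qed
  have fr: "filter (\<lambda>x. fst x = Black) rest = []"
    using rw by (auto simp: filter_empty_conv)
  have y2: "snd y = 2" using assms(1,3,4) fr unfolding L r_of_def by simp
  define zs where "zs = map vec_of rest"
  have zs0: "\<forall>z\<in>set zs. fst z = 0" using rw by (auto simp: zs_def vec_of_def)
  have ws: "map vec_of L = vec_of x # (2,0) # zs"
    using assms(4) y2 unfolding L zs_def by (simp add: vec_of_def)
  have vx: "fst (vec_of x) = 0" using assms(3) L by (simp add: vec_of_def)
  have lz: "length zs = length L - 2" unfolding zs_def L by simp
  let ?ws = "map vec_of L"
  have B: "cond_b ?ws i" if "2 \<le> i" "i < length L" for i
  proof -
    define k where "k = i - 2"
    have k: "i = Suc (Suc k)" using \<open>2 \<le> i\<close> unfolding k_def by simp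
    have kl: "k < length zs" using that lz k by simp
    have e: "?ws ! i = zs ! k" unfolding ws k by simp
    have "zs ! k \<in> set zs" using kl by (rule nth_mem)
    then have "fst (zs ! k) = 0" using zs0 by blast
    then have m1: "mu (?ws ! i) = PInfty" unfolding e by (rule mu_inf)
    have z1: "sum_list (map fst (take k zs)) = 0"
      by (rule sum_fst0) (use zs0 set_take_subset[of k zs] in blast)
    have z2: "sum_list (map fst (drop k zs)) = 0"
      by (rule sum_fst0) (use zs0 set_drop_subset[of k zs] in blast)
    have t: "fst (vsum (take i ?ws)) = 2" using vx z1
      unfolding ws vsum_def k by simp
    have d: "fst (vsum (drop i ?ws)) = 0" using z2
      unfolding ws vsum_def k by simp
    have "mu (vsum (take i ?ws)) < PInfty" using t by (rule mu_fin)
    then show ?thesis unfolding cond_b_def using m1 mu_inf[OF d] by simp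
  qed
  have A1: "cond_a ?ws 1"
  proof -
    have "fst (vsum (take 1 ?ws)) = 0" unfolding ws vsum_def using vx by simp
    then have "mu (vsum (take 1 ?ws)) = PInfty" by (rule mu_inf)
    moreover have "mu (?ws ! 0) = PInfty" unfolding ws using vx by (simp add: mu_inf)
    moreover have "mu (?ws ! 1) = 0" unfolding ws by (simp add: mu_20)
    ultimately show ?thesis unfolding cond_a_def by simp
  qed
  have nB1: "\<not> cond_b ?ws 1"
  proof -
    have "mu (?ws ! 0) = PInfty" unfolding ws using vx by (simp add: mu_inf)
    moreover have "mu (?ws ! 1) = 0" unfolding ws by (simp add: mu_20)
    ultimately show ?thesis unfolding cond_b_def by simp
  qed
  have S: "{i\<in>{1..<length ?ws}. cond_b ?ws i} = {2..<length L}"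
  proof (intro set_eqI iffI)
    fix i assume "i \<in> {i\<in>{1..<length ?ws}. cond_b ?ws i}"
    then have "1 \<le> i" "i < length L" "i \<noteq> 1" using nB1 by auto
    then show "i \<in> {2..<length L}" by simp
  next
    fix i assume "i \<in> {2..<length L}"
    then show "i \<in> {i\<in>{1..<length ?ws}. cond_b ?ws i}" using B by simp
  qed
  have C: "\<forall>i\<in>{1..<length ?ws}. cond_a ?ws i \<or> cond_b ?ws i"
    proof
    fix i assume i: "i \<in> {1..<length ?ws}"
    show "cond_a ?ws i \<or> cond_b ?ws i"
    proof (cases "i = 1")
      case True then show ?thesis using A1 by simp
    next
      case False then show ?thesis using B i by simp
    qed
  qed
  have "s_of L = (-1) ^ (length L - 2)"
    unfolding s_of_def s_l_def using S C by simp
  also have "\<dots> = (-1) ^ length L"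
  proof -
    obtain m where "length L = m + 2" using assms(2) by (metis le_add_diff_inverse2)
    then show ?thesis by simp
  qed
  finally show ?thesis .
qed

lemma case2:
  assumes "r_of L = 2" "length L \<ge> 1" "fst (L ! 0) = Black"
    "\<forall>i. 1 \<le> i \<and> i < length L \<longrightarrow> fst (L ! i) = White"
  shows "s_of L = (-1) ^ (length L - 1)"
proof -
  obtain x rest where L: "L = x # rest"
    using assms(2) by (cases L) auto
  have rw: "\<forall>z\<in>set rest. fst z = White"
  proof
    fix z assume "z \<in> set rest"
    then obtain j where j: "j < length rest" "rest ! j = z" by (auto simp: in_set_conv_nth)
    have "fst (L ! Suc j) = White" using assms(4)[rule_format, of "Suc j"] j unfolding L by simp
    thus "fst z = White" using j unfolding L by simp
  qed
  have fr: "filter (\<lambda>x. fst x = Black) rest = []"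
    using rw by (auto simp: filter_empty_conv)
  have x2: "snd x = 2" using assms(1,3) fr unfolding L r_of_def by simp
  define zs where "zs = map vec_of rest"
  have zs0: "\<forall>z\<in>set zs. fst z = 0" using rw by (auto simp: zs_def vec_of_def)
  have ws: "map vec_of L = (2,0) # zs"
    using assms(3) x2 unfolding L zs_def by (simp add: vec_of_def)
  have lz: "length zs = length L - 1" unfolding zs_def L by simp
  let ?ws = "map vec_of L"
  have B: "cond_b ?ws i" if "1 \<le> i" "i < length L" for i
  proof -
    define k where "k = i - 1"
    have k: "i = Suc k" using \<open>1 \<le> i\<close> unfolding k_def by simp
    have kl: "k < length zs" using that lz k by simp
    have e: "?ws ! i = zs ! k" unfolding ws k by simp
    have "zs ! k \<in> set zs" using kl by (rule nth_mem)
    then have "fst (zs ! k) = 0" using zs0 by blast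
    then have m1: "mu (?ws ! i) = PInfty" unfolding e by (rule mu_inf)
    have z1: "sum_list (map fst (take k zs)) = 0"
      by (rule sum_fst0) (use zs0 set_take_subset[of k zs] in blast)
    have z2: "sum_list (map fst (drop k zs)) = 0"
      by (rule sum_fst0) (use zs0 set_drop_subset[of k zs] in blast)
    have t: "fst (vsum (take i ?ws)) = 2" using z1
      unfolding ws vsum_def k by simp
    have d: "fst (vsum (drop i ?ws)) = 0" using z2
      unfolding ws vsum_def k by simp
    have "mu (vsum (take i ?ws)) < PInfty" using t by (rule mu_fin)
    then show ?thesis unfolding cond_b_def using m1 mu_inf[OF d] by simp
  qed
  have S: "{i\<in>{1..<length ?ws}. cond_b ?ws i} = {1..<length L}"
    using B by auto
  have C: "\<forall>i\<in>{1..<length ?ws}. cond_a ?ws i \<or> cond_b ?ws i"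
    using B by auto
  show ?thesis
    unfolding s_of_def s_l_def using S C by simp
qed

theorem lemma4p9:
  fixes L :: bwov
  assumes "wf_bwov L"
    and "r_of L = 2"
    and "n_black L = 1"
    and "s_of L \<noteq> 0"
  shows "((length L \<ge> 2 \<and> fst (L ! 0) = White \<and> fst (L ! 1) = Black \<and>
            (\<forall>i. 2 \<le> i \<and> i < length L \<longrightarrow> fst (L ! i) = White))
           \<longrightarrow> s_of L = (-1) ^ length L)
       \<and> ((length L \<ge> 1 \<and> fst (L ! 0) = Black \<and>
            (\<forall>i. 1 \<le> i \<and> i < length L \<longrightarrow> fst (L ! i) = White))
           \<longrightarrow> s_of L = (-1) ^ (length L - 1))"
  using case1[OF assms(2)] case2[OF assms(2)] by blast

end
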